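(* For all $m,d\ge1$, the polynomial $P_d(x_1,\dots,x_m)$ can be computed by a non-commutative UPT circuit of size $O(m^2d)$.
   Context: Let $T_d$ be the complete binary tree of depth $d$ ($2^d$ leaves, $D=2^{d+1}-1$ nodes), with nodes $v_1,\dots,v_D$ listed in in-order (left subtree recursively, root, right subtree recursively). A colouring $\gamma:T_d\to\mathbb{Z}_m$ is legal if for every internal node $u$ with children $v,w$, $\gamma(u)=\gamma(v)+\gamma(w)\bmod m$. Identify $\mathbb{Z}_m$ with $\{1,\dots,m\}$. $P_d(x_1,\dots,x_m)=\sum_{\gamma\text{ legal}}x_{\gamma(v_1)}\cdots x_{\gamma(v_D)}\in\mathbb{F}\langle x_1,\dots,x_m\rangle$. A non-commutative circuit is a DAG with one output, leaves variables or constants, $+$ gates and $\times$ gates with ordered children; a parse tree keeps all children of $\times$ gates and exactly one child of each $+$ gate; a circuit computing a homogeneous polynomial is UPT if all parse trees have the same shape (ordered rooted tree with $+/\times$ labels, forgetting gate names). *)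

theory Defs
  imports Main
begin

text \<open>A non-commutative polynomial in variables x_1, x_2, ... over 'a is represented by
its coefficient function on words (monomials); the word [i1,...,ik] stands for the
monomial x_i1 * ... * x_ik.\<close>

type_synonym 'a ncpoly = "nat list \<Rightarrow> 'a"

definition nczero :: "'a::field ncpoly" where "nczero = (\<lambda>w. 0)"
definition ncone :: "'a::field ncpoly" where "ncone = (\<lambda>w. if w = [] then 1 else 0)"
definition ncconst :: "'a::field \<Rightarrow> 'a ncpoly" where
  "ncconst c = (\<lambda>w. if w = [] then c else 0)"
definition ncvar :: "nat \<Rightarrow> 'a::field ncpoly" where
  "ncvar i = (\<lambda>w. if w = [i] then 1 else 0)"
definition ncadd :: "'a::field ncpoly \<Rightarrow> 'a ncpoly \<Rightarrow> 'a ncpoly" where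
  "ncadd p q = (\<lambda>w. p w + q w)"
definition ncmul :: "'a::field ncpoly \<Rightarrow> 'a ncpoly \<Rightarrow> 'a ncpoly" where
  "ncmul p q = (\<lambda>w. \<Sum>k\<le>length w. p (take k w) * q (drop k w))"

datatype ctree = CLeaf nat | CNode ctree nat ctree

fun root_col :: "ctree \<Rightarrow> nat" where
  "root_col (CLeaf a) = a"
| "root_col (CNode l a r) = a"

fun complete_depth :: "nat \<Rightarrow> ctree \<Rightarrow> bool" where
  "complete_depth d (CLeaf a) = (d = 0)"
| "complete_depth d (CNode l a r) =
     (d > 0 \<and> complete_depth (d - 1) l \<and> complete_depth (d - 1) r)"

text \<open>All colours lie in Z_m identified with {1..m}.\<close>
fun colours_in :: "nat \<Rightarrow> ctree \<Rightarrow> bool" where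
  "colours_in m (CLeaf a) = (a \<in> {1..m})"
| "colours_in m (CNode l a r) = (a \<in> {1..m} \<and> colours_in m l \<and> colours_in m r)"

fun legal :: "nat \<Rightarrow> ctree \<Rightarrow> bool" where
  "legal m (CLeaf a) = True"
| "legal m (CNode l a r) =
     (a mod m = (root_col l + root_col r) mod m \<and> legal m l \<and> legal m r)"

fun inorder :: "ctree \<Rightarrow> nat list" where
  "inorder (CLeaf a) = [a]"
| "inorder (CNode l a r) = inorder l @ [a] @ inorder r"

definition legal_colourings :: "nat \<Rightarrow> nat \<Rightarrow> ctree set" where
  "legal_colourings m d = {t. complete_depth d t \<and> colours_in m t \<and> legal m t}"

text \<open>P_d = sum over legal colourings of the monomial x_{gamma(v_1)} ... x_{gamma(v_D)}:
the coefficient of a word w is the number of legal colourings with in-order word w.\<close>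
definition Pd :: "nat \<Rightarrow> nat \<Rightarrow> 'a::field ncpoly" where
  "Pd m d = (\<lambda>w. of_nat (card {t \<in> legal_colourings m d. inorder t = w}))"

text \<open>A circuit is a list of gates in topological order; the children of gate k
are indices < k; the output is the last gate.\<close>
datatype 'a gate = GVar nat | GConst 'a | GPlus "nat list" | GTimes "nat list"

fun gate_children :: "'a gate \<Rightarrow> nat list" where
  "gate_children (GVar i) = []"
| "gate_children (GConst c) = []"
| "gate_children (GPlus cs) = cs"
| "gate_children (GTimes cs) = cs"

definition wf_circuit :: "'a gate list \<Rightarrow> bool" where
  "wf_circuit C = (C \<noteq> [] \<and> (\<forall>k < length C. \<forall>j \<in> set (gate_children (C ! k)). j < k))"

definition circuit_size :: "'a gate list \<Rightarrow> nat" where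
  "circuit_size C = length C + (\<Sum>g\<leftarrow>C. length (gate_children g))"

fun gate_val :: "'a::field ncpoly list \<Rightarrow> 'a gate \<Rightarrow> 'a ncpoly" where
  "gate_val vs (GVar i) = ncvar i"
| "gate_val vs (GConst c) = ncconst c"
| "gate_val vs (GPlus cs) = foldr ncadd (map (\<lambda>j. vs ! j) cs) nczero"
| "gate_val vs (GTimes cs) = foldr ncmul (map (\<lambda>j. vs ! j) cs) ncone"

primrec gate_vals :: "'a::field gate list \<Rightarrow> nat \<Rightarrow> 'a ncpoly list" where
  "gate_vals C 0 = []"
| "gate_vals C (Suc k) = gate_vals C k @ [gate_val (gate_vals C k) (C ! k)]"

definition circuit_output :: "'a::field gate list \<Rightarrow> 'a ncpoly" where
  "circuit_output C = last (gate_vals C (length C))"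

definition computes :: "'a::field gate list \<Rightarrow> 'a ncpoly \<Rightarrow> bool" where
  "computes C p = (wf_circuit C \<and> circuit_output C = p)"

text \<open>Shapes of parse trees: ordered rooted trees with leaves and +/x labels.
A parse tree keeps all children of a product gate and exactly one child of a sum gate.\<close>
datatype shape = SLeaf | SPlus shape | STimes "shape list"

fun gate_shapes :: "shape set list \<Rightarrow> 'a gate \<Rightarrow> shape set" where
  "gate_shapes ss (GVar i) = {SLeaf}"
| "gate_shapes ss (GConst c) = {SLeaf}"
| "gate_shapes ss (GPlus cs) = (\<Union>j \<in> set cs. SPlus ` (ss ! j))"
| "gate_shapes ss (GTimes cs) =
     {STimes ts | ts. list_all2 (\<lambda>t j. t \<in> ss ! j) ts cs}"

primrec shapes_upto :: "'a gate list \<Rightarrow> nat \<Rightarrow> shape set list" where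
  "shapes_upto C 0 = []"
| "shapes_upto C (Suc k) = shapes_upto C k @ [gate_shapes (shapes_upto C k) (C ! k)]"

definition parse_tree_shapes :: "'a gate list \<Rightarrow> shape set" where
  "parse_tree_shapes C = last (shapes_upto C (length C))"

definition UPT :: "'a gate list \<Rightarrow> bool" where
  "UPT C = (\<forall>s \<in> parse_tree_shapes C. \<forall>t \<in> parse_tree_shapes C. s = t)"

end

theory Submission
  imports Defs
begin


lemma ncadd_foldr: "foldr ncadd (map f xs) nczero w = (\<Sum>x\<leftarrow>xs. f x w)"
  by (induct xs) (auto simp: ncadd_def nczero_def)

lemma ncmul_len:
  assumes "\<And>u. p u \<noteq> 0 \<Longrightarrow> length u = n"
  shows "ncmul p q w = (if n \<le> length w then p (take n w) * q (drop n w) else 0)"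
proof -
  have "ncmul p q w = (\<Sum>k\<in>{..length w}. if k = n then p (take n w) * q (drop n w) else 0)"
    unfolding ncmul_def
  proof (rule sum.cong)
    fix k assume k: "k \<in> {..length w}"
    show "p (take k w) * q (drop k w) = (if k = n then p (take n w) * q (drop n w) else 0)"
    proof (cases "k = n")
      case False
      have "length (take k w) = k" using k by simp
      then have "p (take k w) = 0" using assms[of "take k w"] False by auto
      then show ?thesis using False by simp
    qed simp
  qed simp
  also have "\<dots> = (if n \<le> length w then p (take n w) * q (drop n w) else 0)"
    by (simp)
  finally show ?thesis .
qed

lemma ncmul_one: "ncmul p ncone = p"
proof
  fix w
  have "ncmul p ncone w = (\<Sum>k\<in>{..length w}. if k = length w then p w else 0)"
    unfolding ncmul_def ncone_def
  proof (rule sum.cong)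
    fix k assume "k \<in> {..length w}"
    then show "p (take k w) * (if drop k w = [] then 1 else 0) = (if k = length w then p w else 0)"
      by (cases "k = length w") auto
  qed simp
  then show "ncmul p ncone w = p w" by simp
qed

lemma ncvar_len: "ncvar a u \<noteq> (0::'a::field) \<Longrightarrow> length u = 1"
  by (auto simp: ncvar_def split: if_splits)

definition S :: "nat \<Rightarrow> nat \<Rightarrow> nat \<Rightarrow> nat list \<Rightarrow> ctree set" where
  "S m d a w = {t. complete_depth d t \<and> colours_in m t \<and> legal m t \<and> root_col t = a \<and> inorder t = w}"

lemma length_inorder0: "complete_depth d t \<Longrightarrow> Suc (length (inorder t)) = 2^(Suc d)"
proof (induct t arbitrary: d)
  case (CLeaf x) then show ?case by simp
next
  case (CNode l a r)
  then obtain d' where d: "d = Suc d'" by (cases d) auto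
  with CNode have "Suc (length (inorder l)) = 2^Suc d'" "Suc (length (inorder r)) = 2^Suc d'" by auto
  with d show ?case by simp
qed

lemma length_inorder: "complete_depth d t \<Longrightarrow> length (inorder t) = 2^(Suc d) - 1"
  using length_inorder0[of d t] by simp

lemma root_in: "colours_in m t \<Longrightarrow> root_col t \<in> {1..m}"
  by (cases t) auto

lemma fin_trees: "finite {t. complete_depth d t \<and> colours_in m t}"
proof (induct d)
  case 0
  have "{t. complete_depth 0 t \<and> colours_in m t} \<subseteq> CLeaf ` {1..m}"
  proof
    fix t assume "t \<in> {t. complete_depth 0 t \<and> colours_in m t}"
    then show "t \<in> CLeaf ` {1..m}" by (cases t) auto
  qed
  then show ?case by (rule finite_subset) simp
next
  case (Suc d)
  let ?A = "{t. complete_depth d t \<and> colours_in m t}"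
  have "{t. complete_depth (Suc d) t \<and> colours_in m t} \<subseteq> (\<lambda>(l,a,r). CNode l a r) ` (?A \<times> {1..m} \<times> ?A)"
  proof
    fix t assume "t \<in> {t. complete_depth (Suc d) t \<and> colours_in m t}"
    then show "t \<in> (\<lambda>(l,a,r). CNode l a r) ` (?A \<times> {1..m} \<times> ?A)"
      by (cases t) (auto simp: image_iff)
  qed
  then show ?case by (rule finite_subset) (use Suc in simp)
qed

lemma fin_S: "finite (S m d a w)"
  by (rule finite_subset[OF _ fin_trees[of d m]]) (auto simp: S_def)

definition ff :: "nat \<Rightarrow> nat \<Rightarrow> nat \<Rightarrow> nat" where
  "ff m a b = (a + m - b - 1) mod m + 1"

lemma ff_range: assumes "m \<ge> 1" shows "ff m a b \<in> {1..m}"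
proof -
  have "(a + m - b - 1) mod m < m" using assms by simp
  then show ?thesis unfolding ff_def by auto
qed

lemma ff_sum: assumes "a \<in> {1..m}" "b \<in> {1..m}" shows "(b + ff m a b) mod m = a mod m"
proof -
  have "(b + ff m a b) mod m = (b + 1 + (a + m - b - 1) mod m) mod m" unfolding ff_def by (simp add: ac_simps)
  also have "\<dots> = (b + 1 + (a + m - b - 1)) mod m" by (rule mod_add_right_eq)
  also have "b + 1 + (a + m - b - 1) = a + m" using assms by auto
  finally show ?thesis by simp
qed


lemma aux1: assumes "(c::nat) \<in> {1..m}" "f \<in> {1..m}" "c \<le> f" "(b+c) mod m = (b+f) mod m" shows "c = f"
proof -
  have "m dvd (b+f) - (b+c)" using mod_eq_dvd_iff_nat[of "b+c" "b+f" m] assms by auto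
  then have "m dvd f - c" by simp
  moreover have "f - c < m" using assms by auto
  ultimately show ?thesis using assms(3) by (metis diff_is_0_eq le_antisym nat_dvd_not_less not_gr0)
qed
lemma aux2: "(c::nat) \<in> {1..m} \<Longrightarrow> f \<in> {1..m} \<Longrightarrow> (b+c) mod m = (b+f) mod m \<Longrightarrow> c = f"
  by (metis aux1 nat_le_linear)

lemma ff_unique: assumes "a \<in> {1..m}" "b \<in> {1..m}" "c \<in> {1..m}" "a mod m = (b + c) mod m"
  shows "c = ff m a b"
proof -
  have f: "ff m a b \<in> {1..m}" using ff_range assms by auto
  have "(b + c) mod m = (b + ff m a b) mod m" using ff_sum[OF assms(1,2)] assms(4) by simp
  then show ?thesis using aux2 f assms(3) by blast
qed



fun Qf :: "nat \<Rightarrow> nat \<Rightarrow> nat \<Rightarrow> 'a::field ncpoly" where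
  "Qf m 0 a = ncvar a"
| "Qf m (Suc d) a = foldr ncadd (map (\<lambda>b. ncmul (Qf m d b) (ncmul (ncvar a) (ncmul (Qf m d (ff m a b)) ncone))) [1..<m+1]) nczero"

lemma cd0: "complete_depth 0 t \<longleftrightarrow> (\<exists>x. t = CLeaf x)"
  by (cases t) auto

lemma S0: "a \<in> {1..m} \<Longrightarrow> S m 0 a w = (if w = [a] then {CLeaf a} else {})"
  by (auto simp: S_def cd0)

lemma split_word: "take 1 (drop L w) = [a] \<Longrightarrow> w = take L w @ [a] @ drop (Suc L) w"
  by (metis append_Cons append_Nil append_take_drop_id drop_drop plus_1_eq_Suc)

lemma S_Suc:
  assumes a: "a \<in> {1..m}" and m: "m \<ge> 1" and L: "L = 2^Suc d - 1"
  shows "S m (Suc d) a w = (\<Union>b\<in>{1..m}. (\<lambda>(l,r). CNode l a r) `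
     (if take 1 (drop L w) = [a] then S m d b (take L w) \<times> S m d (ff m a b) (drop (Suc L) w) else {}))"
    (is "?A = ?B")
proof
  show "?A \<subseteq> ?B"
  proof
    fix t assume t: "t \<in> ?A"
    then have cdt: "complete_depth (Suc d) t" "root_col t = a" unfolding S_def by auto
    then obtain l r where tt: "t = CNode l a r" by (cases t) auto
    from t tt have cl: "complete_depth d l" "complete_depth d r" "colours_in m l" "colours_in m r"
      "legal m l" "legal m r" "a mod m = (root_col l + root_col r) mod m"
      and w: "inorder l @ [a] @ inorder r = w" unfolding S_def by auto
    have ll: "length (inorder l) = L" using length_inorder[OF cl(1)] L by simp
    have c1: "take 1 (drop L w) = [a]" "take L w = inorder l" "drop (Suc L) w = inorder r"
      using ll by (auto simp flip: w)
    define b where "b = root_col l"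
    have b: "b \<in> {1..m}" using root_in[OF cl(3)] b_def by simp
    have rc: "root_col r = ff m a b" using ff_unique[OF a b root_in[OF cl(4)]] cl(7) b_def by simp
    have lr: "l \<in> S m d b (take L w)" "r \<in> S m d (ff m a b) (drop (Suc L) w)"
      using cl c1 rc b_def by (auto simp: S_def)
    have lrm: "(l, r) \<in> (if take 1 (drop L w) = [a] then S m d b (take L w) \<times> S m d (ff m a b) (drop (Suc L) w) else {})"
      using lr c1(1) by simp
    have "t \<in> (\<lambda>(l,r). CNode l a r) ` (if take 1 (drop L w) = [a] then S m d b (take L w) \<times> S m d (ff m a b) (drop (Suc L) w) else {})"
      by (rule image_eqI[where x="(l,r)", OF _ lrm]) (simp add: tt)
    then show "t \<in> ?B" using b by (rule UN_I[rotated])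
  qed
next
  show "?B \<subseteq> ?A"
  proof
    fix t assume "t \<in> ?B"
    then obtain b l r where b: "b \<in> {1..m}" and c: "take 1 (drop L w) = [a]"
      and lr: "l \<in> S m d b (take L w)" "r \<in> S m d (ff m a b) (drop (Suc L) w)"
      and tt: "t = CNode l a r"
      by (auto split: if_splits)
    have lg: "a mod m = (root_col l + root_col r) mod m" using ff_sum[OF a b] lr by (simp add: S_def)
    have "inorder l = take L w" "inorder r = drop (Suc L) w" using lr by (simp_all add: S_def)
    then have "inorder t = take L w @ [a] @ drop (Suc L) w" by (simp add: tt)
    then have io: "inorder t = w" using split_word[OF c] by metis
    show "t \<in> ?A" using lr tt a lg io by (simp add: S_def)
  qed
qed

lemma card_S_Suc:
  assumes a: "a \<in> {1..m}" and m: "m \<ge> 1" and L: "L = 2^Suc d - 1"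
  shows "card (S m (Suc d) a w) = (\<Sum>b\<in>{1..m}. if take 1 (drop L w) = [a]
     then card (S m d b (take L w)) * card (S m d (ff m a b) (drop (Suc L) w)) else 0)"
proof -
  let ?f = "\<lambda>(l,r). CNode l a r"
  let ?X = "\<lambda>b. (if take 1 (drop L w) = [a] then S m d b (take L w) \<times> S m d (ff m a b) (drop (Suc L) w) else {})"
  have "card (S m (Suc d) a w) = card (\<Union>b\<in>{1..m}. ?f ` ?X b)" using S_Suc[OF a m L] by simp
  also have "\<dots> = (\<Sum>b\<in>{1..m}. card (?f ` ?X b))"
  proof (rule card_UN_disjoint)
    show "\<forall>b\<in>{1..m}. finite (?f ` ?X b)" using fin_S by auto
    show "\<forall>b\<in>{1..m}. \<forall>b'\<in>{1..m}. b \<noteq> b' \<longrightarrow> ?f ` ?X b \<inter> ?f ` ?X b' = {}"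
      by (auto simp: S_def split: if_splits)
  qed simp
  also have "\<dots> = (\<Sum>b\<in>{1..m}. card (?X b))"
  proof (rule sum.cong)
    fix b show "card (?f ` ?X b) = card (?X b)"
      by (rule card_image) (auto simp: inj_on_def)
  qed simp
  also have "\<dots> = (\<Sum>b\<in>{1..m}. if take 1 (drop L w) = [a]
     then card (S m d b (take L w)) * card (S m d (ff m a b) (drop (Suc L) w)) else 0)"
    by (rule sum.cong) (auto simp: card_cartesian_product)
  finally show ?thesis .
qed

lemma sum_list_upt1: "(\<Sum>x\<leftarrow>[1..<m+1]. f x) = (\<Sum>x\<in>{1..m}. (f x :: 'b::comm_monoid_add))"
proof -
  have "set [1..<m+1] = {1..m}" by auto
  then show ?thesis by (simp add: sum_list_distinct_conv_sum_set del: upt_Suc)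
qed

lemma Qf_card: "m \<ge> 1 \<Longrightarrow> a \<in> {1..m} \<Longrightarrow> (Qf m d a w :: 'a::field) = of_nat (card (S m d a w))"
proof (induct d arbitrary: a w)
  case 0
  then show ?case by (simp add: S0 ncvar_def)
next
  case (Suc d)
  define L where "L = (2::nat)^Suc d - 1"
  have supp: "length u = L" if "b \<in> {1..m}" "(Qf m d b u :: 'a) \<noteq> 0" for b u
  proof -
    have "card (S m d b u) \<noteq> 0" using that Suc.hyps[OF Suc.prems(1) that(1)] by (metis of_nat_0)
    then obtain t where "t \<in> S m d b u" by (metis card.empty ex_in_conv)
    then show ?thesis using length_inorder L_def by (auto simp: S_def)
  qed
  have trm: "ncmul (Qf m d b) (ncmul (ncvar a) (ncmul (Qf m d (ff m a b)) ncone)) w =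
     (of_nat (if take 1 (drop L w) = [a]
     then card (S m d b (take L w)) * card (S m d (ff m a b) (drop (Suc L) w)) else 0) :: 'a)"
    if b: "b \<in> {1..m}" for b
  proof -
    have fb: "ff m a b \<in> {1..m}" using ff_range Suc.prems(1) by auto
    have e: "ncmul (Qf m d b) (ncmul (ncvar a) (ncmul (Qf m d (ff m a b)) ncone)) w =
      (if L \<le> length w then Qf m d b (take L w) * (if 1 \<le> length (drop L w) then
         ncvar a (take 1 (drop L w)) * Qf m d (ff m a b) (drop 1 (drop L w)) else 0) else (0::'a))"
      by (simp add: ncmul_one ncmul_len[where n=L, OF supp[OF b]] ncmul_len[where n=1, OF ncvar_len])
    show ?thesis
    proof (cases "take 1 (drop L w) = [a]")
      case True
      then have ne: "drop L w \<noteq> []" by auto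
      then have "L \<le> length w" "1 \<le> length (drop L w)" "drop 1 (drop L w) = drop (Suc L) w"
        by auto
      then show ?thesis using True e Suc.hyps[OF Suc.prems(1) b] Suc.hyps[OF Suc.prems(1) fb]
        by (simp add: ncvar_def)
    next
      case False
      then show ?thesis using e by (simp add: ncvar_def)
    qed
  qed
  have "(Qf m (Suc d) a w :: 'a) = (\<Sum>b\<in>{1..m}. ncmul (Qf m d b) (ncmul (ncvar a) (ncmul (Qf m d (ff m a b)) ncone)) w)"
    by (simp only: Qf.simps ncadd_foldr sum_list_upt1)
  also have "\<dots> = (\<Sum>b\<in>{1..m}. of_nat (if take 1 (drop L w) = [a]
     then card (S m d b (take L w)) * card (S m d (ff m a b) (drop (Suc L) w)) else 0))"
    by (rule sum.cong) (simp_all add: trm)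
  also have "\<dots> = of_nat (card (S m (Suc d) a w))"
    by (simp add: card_S_Suc[OF Suc.prems(2,1) L_def] del: of_nat_mult)
  finally show ?case .
qed

lemma Pd_Qf:
  assumes m: "m \<ge> 1"
  shows "(Pd m d :: 'a::field ncpoly) = foldr ncadd (map (Qf m d) [1..<m+1]) nczero"
proof
  fix w
  have "{t \<in> legal_colourings m d. inorder t = w} = (\<Union>a\<in>{1..m}. S m d a w)"
  proof (intro set_eqI iffI)
    fix t assume "t \<in> {t \<in> legal_colourings m d. inorder t = w}"
    then show "t \<in> (\<Union>a\<in>{1..m}. S m d a w)"
      using root_in[of m t] by (auto simp: legal_colourings_def S_def)
  qed (auto simp: legal_colourings_def S_def)
  then have "card {t \<in> legal_colourings m d. inorder t = w} = card (\<Union>a\<in>{1..m}. S m d a w)"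
    by simp
  also have "\<dots> = (\<Sum>a\<in>{1..m}. card (S m d a w))"
  proof (rule card_UN_disjoint)
    show "\<forall>a\<in>{1..m}. finite (S m d a w)" using fin_S by blast
    show "\<forall>i\<in>{1..m}. \<forall>j\<in>{1..m}. i \<noteq> j \<longrightarrow> S m d i w \<inter> S m d j w = {}"
      by (auto simp: S_def)
  qed simp
  finally have "card {t \<in> legal_colourings m d. inorder t = w} = (\<Sum>a\<in>{1..m}. card (S m d a w))" .
  then have "(Pd m d :: 'a ncpoly) w = of_nat (\<Sum>a\<in>{1..m}. card (S m d a w))"
    by (simp add: Pd_def)
  also have "\<dots> = (\<Sum>a\<in>{1..m}. of_nat (card (S m d a w)))" by (rule of_nat_sum)
  also have "\<dots> = (\<Sum>a\<in>{1..m}. Qf m d a w)"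
    by (rule sum.cong, simp, rule Qf_card[OF m, symmetric], simp)
  also have "\<dots> = foldr ncadd (map (Qf m d) [1..<m+1]) nczero w"
    by (simp only: ncadd_foldr sum_list_upt1)
  finally show "(Pd m d :: 'a ncpoly) w = foldr ncadd (map (Qf m d) [1..<m+1]) nczero w" .
qed



definition val :: "'a::field gate list \<Rightarrow> nat \<Rightarrow> 'a ncpoly" where
  "val C j = gate_vals C (Suc j) ! j"

lemma len_gv: "length (gate_vals C k) = k"
  by (induct k) auto

lemma gv_nth: "i < k \<Longrightarrow> gate_vals C k ! i = val C i"
proof (induct k)
  case 0 then show ?case by simp
next
  case (Suc k)
  show ?case
  proof (cases "i < k")
    case True
    then show ?thesis using Suc by (simp add: nth_append len_gv)
  next
    case False
    then have "i = k" using Suc.prems by simp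
    then show ?thesis by (simp add: val_def)
  qed
qed

lemma val_eq: "val C j = gate_val (gate_vals C j) (C ! j)"
  by (simp add: val_def nth_append len_gv)

lemma val_var: "C ! j = GVar i \<Longrightarrow> val C j = ncvar i"
  by (simp add: val_eq)

lemma val_plus: "C ! j = GPlus cs \<Longrightarrow> \<forall>i\<in>set cs. i < j \<Longrightarrow> val C j = foldr ncadd (map (val C) cs) nczero"
  by (simp add: val_eq gv_nth cong: map_cong)

lemma val_times: "C ! j = GTimes cs \<Longrightarrow> \<forall>i\<in>set cs. i < j \<Longrightarrow> val C j = foldr ncmul (map (val C) cs) ncone"
  by (simp add: val_eq gv_nth cong: map_cong)

definition shv :: "'a gate list \<Rightarrow> nat \<Rightarrow> shape set" where
  "shv C j = shapes_upto C (Suc j) ! j"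

lemma len_su: "length (shapes_upto C k) = k"
  by (induct k) auto

lemma su_nth: "i < k \<Longrightarrow> shapes_upto C k ! i = shv C i"
proof (induct k)
  case 0 then show ?case by simp
next
  case (Suc k)
  show ?case
  proof (cases "i < k")
    case True
    then show ?thesis using Suc by (simp add: nth_append len_su)
  next
    case False
    then have "i = k" using Suc.prems by simp
    then show ?thesis by (simp add: shv_def)
  qed
qed

lemma shv_eq: "shv C j = gate_shapes (shapes_upto C j) (C ! j)"
  by (simp add: shv_def nth_append len_su)

lemma shv_var: "C ! j = GVar i \<Longrightarrow> shv C j = {SLeaf}"
  by (simp add: shv_eq)

lemma shv_plus:
  assumes "C ! j = GPlus cs" "\<forall>i\<in>set cs. i < j" "\<forall>i\<in>set cs. shv C i = {s}" "cs \<noteq> []"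
  shows "shv C j = {SPlus s}"
proof -
  have "shv C j = (\<Union>i\<in>set cs. SPlus ` shv C i)" using assms(1,2) by (simp add: shv_eq su_nth)
  also have "\<dots> = {SPlus s}" using assms(3,4) by auto
  finally show ?thesis .
qed

lemma la2_single:
  assumes "list_all2 (\<lambda>i s. P i = {s}) cs ss"
  shows "list_all2 (\<lambda>t j. t \<in> P j) ts cs \<longleftrightarrow> ts = ss"
  using assms
proof (induct cs arbitrary: ss ts)
  case Nil then show ?case by auto
next
  case (Cons c cs)
  then obtain s ss' where ss: "ss = s # ss'" "P c = {s}" "list_all2 (\<lambda>i s. P i = {s}) cs ss'"
    by (auto simp: list_all2_Cons1)
  show ?case using Cons.hyps[OF ss(3)] ss by (cases ts) auto
qed

lemma shv_times:
  assumes "C ! j = GTimes cs" "\<forall>i\<in>set cs. i < j" "list_all2 (\<lambda>i s. shv C i = {s}) cs ss"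
  shows "shv C j = {STimes ss}"
proof -
  have "shv C j = {STimes ts |ts. list_all2 (\<lambda>t i. t \<in> shv C i) ts cs}"
    using assms(1,2) by (simp add: shv_eq su_nth cong: list.rel_cong)
  also have "\<dots> = {STimes ss}" using la2_single[OF assms(3)] by auto
  finally show ?thesis .
qed



fun qi :: "nat \<Rightarrow> nat \<Rightarrow> nat \<Rightarrow> nat" where
  "qi m 0 a = a - 1"
| "qi m (Suc k) a = m + k * (m*m+m) + m*m + (a - 1)"

definition blk :: "nat \<Rightarrow> nat \<Rightarrow> nat \<Rightarrow> 'a gate" where
  "blk m k s = (if s < m*m then GTimes [qi m k (s mod m + 1), s div m, qi m k (ff m (s div m + 1) (s mod m + 1))]
    else GPlus (map (\<lambda>b. m + k*(m*m+m) + (s - m*m)*m + (b - 1)) [1..<m+1]))"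

definition gp :: "nat \<Rightarrow> nat \<Rightarrow> 'a gate" where
  "gp m j = (if j < m then GVar (j+1) else blk m ((j-m) div (m*m+m)) ((j-m) mod (m*m+m)))"

definition circ :: "nat \<Rightarrow> nat \<Rightarrow> 'a gate list" where
  "circ m d = map (gp m) [0..<m + d*(m*m+m)] @ [GPlus (map (qi m d) [1..<m+1])]"

lemma idx_lt:
  fixes x m b :: nat
  assumes "x < m" "b \<in> {1..m}" shows "x*m + (b-1) < m*m"
proof -
  have "b - 1 < m" using assms by auto
  then have "x*m + (b-1) < x*m + m" by simp
  also have "\<dots> = Suc x * m" by simp
  also have "\<dots> \<le> m*m" using assms(1) by (intro mult_le_mono1) simp
  finally show ?thesis .
qed

lemma qi_lt: "a \<in> {1..m} \<Longrightarrow> qi m k a < m + k*(m*m+m)"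
  by (cases k) auto

lemma dm: assumes "(s::nat) < M" shows "(k*M + s) div M = k" "(k*M+s) mod M = s"
proof -
  have M: "M \<noteq> 0" using assms by auto
  have "(s + k*M) div M = k + s div M" using div_mult_self1[OF M] by simp
  then show "(k*M + s) div M = k" using assms by (simp add: add.commute)
  have "(s + k*M) mod M = s mod M" by simp
  then show "(k*M+s) mod M = s" using assms by (simp add: add.commute)
qed

lemma gp_blk: "s < m*m+m \<Longrightarrow> gp m (m + k*(m*m+m) + s) = blk m k s"
  unfolding gp_def by (simp add: dm)

lemma blk_children:
  assumes m: "m \<ge> 1" and s: "s < m*m+m"
  shows "\<forall>j\<in>set (gate_children (blk m k s :: 'a gate)). j < m + k*(m*m+m) + s"
proof (cases "s < m*m")
  case True
  have "s mod m < m" using m by simp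
  then have r1: "s mod m + 1 \<in> {1..m}" by auto
  have r2: "ff m (s div m + 1) (s mod m + 1) \<in> {1..m}" using ff_range m by auto
  have "s div m < m" using True by (simp add: less_mult_imp_div_less)
  then show ?thesis using True qi_lt[OF r1, of k] qi_lt[OF r2, of k] by (auto simp: blk_def)
next
  case False
  have "(s - m*m)*m + (b - 1) < m*m" if "b \<in> {1..m}" for b
    using idx_lt[OF _ that, of "s - m*m"] False s by auto
  then show ?thesis using False by (fastforce simp: blk_def)
qed

lemma circ_nth: "j < m + d*(m*m+m) \<Longrightarrow> circ m d ! j = gp m j"
  by (simp add: circ_def nth_append)

lemma circ_last: "circ m d ! (m + d*(m*m+m)) = GPlus (map (qi m d) [1..<m+1])"
  by (simp add: circ_def nth_append)

lemma len_circ: "length (circ m d) = m + d*(m*m+m) + 1"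
  by (simp add: circ_def)

lemma decode: "(b::nat) \<in> {1..m} \<Longrightarrow> ((a-1)*m + (b-1)) mod m = b - 1 \<and> ((a-1)*m + (b-1)) div m = a - 1"
  using dm[of "b - 1" m "a - 1"] by auto



lemma val_var_gate:
  assumes "a \<in> {1..m}"
  shows "val (circ m d :: 'a::field gate list) (a - 1) = ncvar a"
proof -
  have a1: "a - 1 < m" using assms by auto
  have "a - 1 < m + d*(m*m+m)" using assms by auto
  then have "circ m d ! (a - 1) = (GVar a :: 'a gate)" using assms a1 by (simp add: circ_nth gp_def)
  then show ?thesis by (rule val_var)
qed

lemma lvl_val:
  assumes m: "m \<ge> 1"
  shows "k \<le> d \<Longrightarrow> a \<in> {1..m} \<Longrightarrow> val (circ m d :: 'a::field gate list) (qi m k a) = Qf m k a"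
proof (induct k arbitrary: a)
  case 0
  then show ?case using val_var_gate[of a m d] by simp
next
  case (Suc k)
  let ?C = "circ m d :: 'a gate list"
  let ?M = "m*m+m"
  define j where "j = m + k*?M + (m*m + (a-1))"
  have a1: "a - 1 < m" using Suc.prems by auto
  have sM: "m*m + (a-1) < ?M" using a1 by simp
  have qj: "qi m (Suc k) a = j" by (simp add: j_def)
  have "j < m + k*?M + ?M" using sM j_def by simp
  also have "\<dots> = m + Suc k * ?M" by simp
  also have "\<dots> \<le> m + d * ?M" using Suc.prems(1) by (intro add_left_mono mult_le_mono1)
  finally have jlt: "j < m + d*?M" .
  have "?C ! j = gp m j" by (rule circ_nth[OF jlt])
  also have "gp m j = blk m k (m*m + (a-1))" unfolding j_def by (rule gp_blk[OF sM])
  finally have Cj: "?C ! j = blk m k (m*m + (a-1))" .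
  have blkj: "(blk m k (m*m + (a-1)) :: 'a gate) = GPlus (map (\<lambda>b. m + k*?M + (a-1)*m + (b-1)) [1..<m+1])"
    by (simp add: blk_def)
  have ch: "\<forall>i\<in>set (map (\<lambda>b. m + k*?M + (a-1)*m + (b-1)) [1..<m+1]). i < j"
    using blk_children[OF m sM, of k, where 'a='a] blkj j_def by simp
  have vj: "val ?C j = foldr ncadd (map (val ?C) (map (\<lambda>b. m + k*?M + (a-1)*m + (b-1)) [1..<m+1])) nczero"
    using val_plus[OF Cj[unfolded blkj] ch] .
  have vp: "val ?C (m + k*?M + (a-1)*m + (b-1)) =
      ncmul (Qf m k b) (ncmul (ncvar a) (ncmul (Qf m k (ff m a b)) ncone))" if b: "b \<in> {1..m}" for b
  proof -
    define s where "s = (a-1)*m + (b-1)"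
    have s1: "s < m*m" using idx_lt[OF a1 b] s_def by simp
    then have s2: "s < ?M" by simp
    have p: "m + k*?M + (a-1)*m + (b-1) = m + k*?M + s" by (simp add: s_def)
    have d1: "s mod m = b - 1" unfolding s_def by (rule conjunct1[OF decode[OF b]])
    have d2: "s div m = a - 1" unfolding s_def by (rule conjunct2[OF decode[OF b]])
    have dec: "s mod m + 1 = b" "s div m = a - 1" "s div m + 1 = a"
      using d1 d2 b Suc.prems(2) by auto
    have bl: "(blk m k s :: 'a gate) = GTimes [qi m k b, a - 1, qi m k (ff m a b)]"
      using s1 dec by (simp add: blk_def)
    have "m + k*?M + s < m + d*?M" using jlt j_def s1 by simp
    then have Cp: "?C ! (m + k*?M + s) = GTimes [qi m k b, a - 1, qi m k (ff m a b)]"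
      by (simp add: circ_nth gp_blk[OF s2] bl)
    have chp: "\<forall>i\<in>set [qi m k b, a - 1, qi m k (ff m a b)]. i < m + k*?M + s"
      using blk_children[OF m s2, of k, where 'a='a] bl by simp
    have fb: "ff m a b \<in> {1..m}" using ff_range m by auto
    have kd: "k \<le> d" using Suc.prems(1) by simp
    show ?thesis unfolding p
      using val_times[OF Cp chp] Suc.hyps[OF kd b] Suc.hyps[OF kd fb] val_var_gate[OF Suc.prems(2), of d, where 'a='a]
      by simp
  qed
  have "val ?C (qi m (Suc k) a) = foldr ncadd (map (\<lambda>b. ncmul (Qf m k b) (ncmul (ncvar a) (ncmul (Qf m k (ff m a b)) ncone))) [1..<m+1]) nczero"
    unfolding qj vj map_map
    by (rule arg_cong[where f="\<lambda>l. foldr ncadd l nczero"], rule map_cong[OF refl], unfold comp_def, rule vp, auto)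
  then show ?case by simp
qed



fun shp :: "nat \<Rightarrow> shape" where
  "shp 0 = SLeaf"
| "shp (Suc k) = SPlus (STimes [shp k, SLeaf, shp k])"

lemma var_gate:
  assumes "a \<in> {1..m}"
  shows "circ m d ! (a - 1) = (GVar a :: 'a gate)"
proof -
  have a1: "a - 1 < m" using assms by auto
  have "a - 1 < m + d*(m*m+m)" using assms by auto
  then show ?thesis using assms a1 by (simp add: circ_nth gp_def)
qed

lemma plus_gate:
  assumes m: "m \<ge> 1" and kd: "Suc k \<le> d" and a: "a \<in> {1..m}"
  shows "(circ m d :: 'a gate list) ! qi m (Suc k) a = GPlus (map (\<lambda>b. m + k*(m*m+m) + (a-1)*m + (b-1)) [1..<m+1])"
    "\<forall>i\<in>set (map (\<lambda>b. m + k*(m*m+m) + (a-1)*m + (b-1)) [1..<m+1]). i < qi m (Suc k) a"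
proof -
  let ?C = "circ m d :: 'a gate list"
  let ?M = "m*m+m"
  define j where "j = m + k*?M + (m*m + (a-1))"
  have a1: "a - 1 < m" using a by auto
  have sM: "m*m + (a-1) < ?M" using a1 by simp
  have qj: "qi m (Suc k) a = j" by (simp add: j_def)
  have "j < m + k*?M + ?M" using sM j_def by simp
  also have "\<dots> = m + Suc k * ?M" by simp
  also have "\<dots> \<le> m + d * ?M" using kd by (intro add_left_mono mult_le_mono1)
  finally have jlt: "j < m + d*?M" .
  have "?C ! j = gp m j" by (rule circ_nth[OF jlt])
  also have "gp m j = blk m k (m*m + (a-1))" unfolding j_def by (rule gp_blk[OF sM])
  finally have Cj: "?C ! j = blk m k (m*m + (a-1))" .
  have blkj: "(blk m k (m*m + (a-1)) :: 'a gate) = GPlus (map (\<lambda>b. m + k*?M + (a-1)*m + (b-1)) [1..<m+1])"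
    by (simp add: blk_def)
  show "?C ! qi m (Suc k) a = GPlus (map (\<lambda>b. m + k*?M + (a-1)*m + (b-1)) [1..<m+1])"
    using Cj blkj qj by simp
  show "\<forall>i\<in>set (map (\<lambda>b. m + k*?M + (a-1)*m + (b-1)) [1..<m+1]). i < qi m (Suc k) a"
    using blk_children[OF m sM, of k, where 'a='a] blkj j_def qj by simp
qed

lemma prod_gate:
  assumes m: "m \<ge> 1" and kd: "Suc k \<le> d" and a: "a \<in> {1..m}" and b: "b \<in> {1..m}"
  shows "(circ m d :: 'a gate list) ! (m + k*(m*m+m) + (a-1)*m + (b-1)) = GTimes [qi m k b, a - 1, qi m k (ff m a b)]"
    "\<forall>i\<in>set [qi m k b, a - 1, qi m k (ff m a b)]. i < m + k*(m*m+m) + (a-1)*m + (b-1)"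
proof -
  let ?C = "circ m d :: 'a gate list"
  let ?M = "m*m+m"
  have a1: "a - 1 < m" using a by auto
  define s where "s = (a-1)*m + (b-1)"
  have s1: "s < m*m" using idx_lt[OF a1 b] s_def by simp
  then have s2: "s < ?M" by simp
  have p: "m + k*?M + (a-1)*m + (b-1) = m + k*?M + s" by (simp add: s_def)
  have d1: "s mod m = b - 1" unfolding s_def by (rule conjunct1[OF decode[OF b]])
  have d2: "s div m = a - 1" unfolding s_def by (rule conjunct2[OF decode[OF b]])
  have dec: "s mod m + 1 = b" "s div m = a - 1" "s div m + 1 = a"
    using d1 d2 b a by auto
  have bl: "(blk m k s :: 'a gate) = GTimes [qi m k b, a - 1, qi m k (ff m a b)]"
    using s1 dec by (simp add: blk_def)
  have "m + k*?M + s < m + k*?M + ?M" using s2 by simp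
  also have "\<dots> = m + Suc k * ?M" by simp
  also have "\<dots> \<le> m + d * ?M" using kd by (intro add_left_mono mult_le_mono1)
  finally have "m + k*?M + s < m + d*?M" .
  then show "?C ! (m + k*?M + (a-1)*m + (b-1)) = GTimes [qi m k b, a - 1, qi m k (ff m a b)]"
    unfolding p by (simp add: circ_nth gp_blk[OF s2] bl)
  show "\<forall>i\<in>set [qi m k b, a - 1, qi m k (ff m a b)]. i < m + k*?M + (a-1)*m + (b-1)"
    unfolding p using blk_children[OF m s2, of k, where 'a='a] bl by simp
qed

lemma lvl_sh:
  assumes m: "m \<ge> 1"
  shows "k \<le> d \<Longrightarrow> a \<in> {1..m} \<Longrightarrow> shv (circ m d :: 'a gate list) (qi m k a) = {shp k}"
proof (induct k arbitrary: a)
  case 0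
  then show ?case using shv_var[OF var_gate[OF 0(2), of d, where 'a='a]] by simp
next
  case (Suc k)
  let ?C = "circ m d :: 'a gate list"
  have kd: "k \<le> d" using Suc.prems(1) by simp
  have pr: "shv ?C (m + k*(m*m+m) + (a-1)*m + (b-1)) = {STimes [shp k, SLeaf, shp k]}"
    if b: "b \<in> {1..m}" for b
  proof (rule shv_times[OF prod_gate[OF m Suc.prems(1,2) b]])
    have fb: "ff m a b \<in> {1..m}" using ff_range m by auto
    show "list_all2 (\<lambda>i s. shv ?C i = {s}) [qi m k b, a - 1, qi m k (ff m a b)] [shp k, SLeaf, shp k]"
      using Suc.hyps[OF kd b] Suc.hyps[OF kd fb] shv_var[OF var_gate[OF Suc.prems(2), of d, where 'a='a]]
      by simp
  qed
  have ne: "map (\<lambda>b. m + k*(m*m+m) + (a-1)*m + (b-1)) [1..<m+1] \<noteq> []" using m by simp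
  have "shv ?C (qi m (Suc k) a) = {SPlus (STimes [shp k, SLeaf, shp k])}"
  proof (rule shv_plus[OF plus_gate[OF m Suc.prems(1,2)] _ ne])
    show "\<forall>i\<in>set (map (\<lambda>b. m + k * (m * m + m) + (a - 1) * m + (b - 1)) [1..<m + 1]). shv ?C i = {STimes [shp k, SLeaf, shp k]}"
    proof
      fix i assume "i \<in> set (map (\<lambda>b. m + k * (m * m + m) + (a - 1) * m + (b - 1)) [1..<m + 1])"
      then obtain b where b0: "b \<in> set [1..<m+1]" and ii: "i = m + k * (m * m + m) + (a - 1) * m + (b - 1)"
        unfolding set_map by blast
      from b0 have "b \<in> {1..m}" by auto
      with ii show "shv ?C i = {STimes [shp k, SLeaf, shp k]}" using pr by blast
    qed
  qed
  then show ?case by simp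
qed



lemma final_children: "\<forall>i\<in>set (map (qi m d) [1..<m+1]). i < m + d*(m*m+m)"
  using qi_lt by auto

lemma wf_circ: assumes m: "m \<ge> 1" shows "wf_circuit (circ m d :: 'a gate list)"
  unfolding wf_circuit_def
proof (intro conjI allI impI ballI)
  show "(circ m d :: 'a gate list) \<noteq> []" by (simp add: circ_def)
next
  fix k j assume k: "k < length (circ m d :: 'a gate list)" and j: "j \<in> set (gate_children ((circ m d :: 'a gate list) ! k))"
  let ?M = "m*m+m"
  show "j < k"
  proof (cases "k < m + d*?M")
    case True
    then have Ck: "(circ m d :: 'a gate list) ! k = gp m k" by (rule circ_nth)
    show ?thesis
    proof (cases "k < m")
      case True
      then show ?thesis using j Ck by (simp add: gp_def)
    next
      case False
      define k' where "k' = (k - m) div ?M"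
      define s where "s = (k - m) mod ?M"
      have s: "s < ?M" using m s_def by simp
      have "k' * ?M + s = k - m" unfolding k'_def s_def by (rule div_mult_mod_eq)
      then have kk: "k = m + k'*?M + s" using False by simp
      have "gp m k = (blk m k' s :: 'a gate)" unfolding kk by (rule gp_blk[OF s])
      then show ?thesis using blk_children[OF m s, of k', where 'a='a] j Ck kk by simp
    qed
  next
    case False
    then have kk: "k = m + d*?M" using k len_circ[of m d, where 'a='a] by simp
    have "j \<in> set (map (qi m d) [1..<m+1])" using j kk by (simp only: circ_last gate_children.simps)
    then show ?thesis using final_children[of m d] kk by blast
  qed
qed

lemma last_val: assumes "C \<noteq> []" shows "circuit_output C = val C (length C - 1)"
proof -
  have "gate_vals C (length C) \<noteq> []" using assms len_gv[of C "length C"] by auto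
  then show ?thesis unfolding circuit_output_def using assms
    by (simp add: last_conv_nth len_gv gv_nth)
qed

lemma last_sh: assumes "C \<noteq> []" shows "parse_tree_shapes C = shv C (length C - 1)"
proof -
  have "shapes_upto C (length C) \<noteq> []" using assms len_su[of C "length C"] by auto
  then show ?thesis unfolding parse_tree_shapes_def using assms
    by (simp add: last_conv_nth len_su su_nth)
qed

lemma output_circ: assumes m: "m \<ge> 1" shows "circuit_output (circ m d :: 'a::field gate list) = Pd m d"
proof -
  let ?C = "circ m d :: 'a gate list"
  have "circuit_output ?C = val ?C (m + d*(m*m+m))"
    using last_val[of ?C] len_circ[of m d] by (simp add: circ_def)
  also have "\<dots> = foldr ncadd (map (val ?C) (map (qi m d) [1..<m+1])) nczero"
    by (rule val_plus[OF circ_last final_children])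
  also have "map (val ?C) (map (qi m d) [1..<m+1]) = map (Qf m d) [1..<m+1]"
    by (auto simp: lvl_val[OF m])
  also have "foldr ncadd (map (Qf m d) [1..<m+1]) nczero = Pd m d" by (rule Pd_Qf[OF m, symmetric])
  finally show ?thesis .
qed

lemma upt_circ: assumes m: "m \<ge> 1" shows "UPT (circ m d :: 'a gate list)"
proof -
  let ?C = "circ m d :: 'a gate list"
  have "parse_tree_shapes ?C = shv ?C (m + d*(m*m+m))"
    using last_sh[of ?C] len_circ[of m d] by (simp add: circ_def)
  also have "\<dots> = {SPlus (shp d)}"
  proof (rule shv_plus[OF circ_last final_children])
    show "\<forall>i\<in>set (map (qi m d) [1..<m + 1]). shv ?C i = {shp d}" using lvl_sh[OF m] by auto
    show "map (qi m d) [1..<m + 1] \<noteq> []" using m by simp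
  qed
  finally show ?thesis unfolding UPT_def by simp
qed



lemma len_blk: "length (gate_children (blk m k s :: 'a gate)) = (if s < m*m then 3 else m)"
  by (simp add: blk_def)

lemma sum_blk: "(\<Sum>s\<in>{0..<m*m+m}. length (gate_children (blk m k s :: 'a gate))) = 4*(m*m)"
proof -
  have "(\<Sum>s\<in>{0..<m*m+m}. length (gate_children (blk m k s :: 'a gate)))
      = (\<Sum>s\<in>{0..<m*m}. length (gate_children (blk m k s :: 'a gate))) + (\<Sum>s\<in>{m*m..<m*m+m}. length (gate_children (blk m k s :: 'a gate)))"
    by (rule sum.atLeastLessThan_concat[symmetric]) simp_all
  also have "(\<Sum>s\<in>{0..<m*m}. length (gate_children (blk m k s :: 'a gate))) = (\<Sum>s\<in>{0..<m*m}. 3)"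
    by (rule sum.cong) (simp_all add: len_blk)
  also have "(\<Sum>s\<in>{m*m..<m*m+m}. length (gate_children (blk m k s :: 'a gate))) = (\<Sum>s\<in>{m*m..<m*m+m}. m)"
    by (rule sum.cong) (simp_all add: len_blk)
  finally show ?thesis by simp
qed

lemma sum_gp: "(\<Sum>j\<in>{0..<m + d*(m*m+m)}. length (gate_children (gp m j :: 'a gate))) = d * (4*(m*m))"
proof (induct d)
  case 0
  show ?case by (auto simp: gp_def)
next
  case (Suc d)
  let ?M = "m*m+m"
  let ?g = "\<lambda>j. length (gate_children (gp m j :: 'a gate))"
  have "(\<Sum>j\<in>{0..<m + Suc d*?M}. ?g j) = (\<Sum>j\<in>{0..<m + d*?M}. ?g j) + (\<Sum>j\<in>{m + d*?M..<m + Suc d*?M}. ?g j)"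
    by (rule sum.atLeastLessThan_concat[symmetric]) simp_all
  also have "(\<Sum>j\<in>{m + d*?M..<m + Suc d*?M}. ?g j) = (\<Sum>j\<in>{0 + (m + d*?M)..<?M + (m + d*?M)}. ?g j)"
    by (simp add: add_ac)
  also have "\<dots> = (\<Sum>s\<in>{0..<?M}. ?g (s + (m + d*?M)))" by (rule sum.shift_bounds_nat_ivl)
  also have "\<dots> = (\<Sum>s\<in>{0..<?M}. length (gate_children (blk m d s :: 'a gate)))"
  proof (rule sum.cong)
    fix s assume "s \<in> {0..<?M}"
    then have "s < ?M" by simp
    then have "gp m (m + d*?M + s) = (blk m d s :: 'a gate)" by (rule gp_blk)
    then show "?g (s + (m + d*?M)) = length (gate_children (blk m d s :: 'a gate))" by (simp add: add_ac)
  qed simp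
  also have "\<dots> = 4*(m*m)" by (rule sum_blk)
  finally show ?case using Suc by simp
qed

lemma size_circ: "circuit_size (circ m d :: 'a gate list) = (m + d*(m*m+m) + 1) + d * (4*(m*m)) + m"
proof -
  have "(\<Sum>g\<leftarrow>(circ m d :: 'a gate list). length (gate_children g))
     = (\<Sum>j\<leftarrow>[0..<m + d*(m*m+m)]. length (gate_children (gp m j :: 'a gate))) + m"
    by (simp add: circ_def comp_def)
  also have "(\<Sum>j\<leftarrow>[0..<m + d*(m*m+m)]. length (gate_children (gp m j :: 'a gate)))
     = (\<Sum>j\<in>{0..<m + d*(m*m+m)}. length (gate_children (gp m j :: 'a gate)))"
    by (metis sum_set_upt_conv_sum_list_nat set_upt)
  also have "\<dots> = d * (4*(m*m))" by (rule sum_gp)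
  finally show ?thesis unfolding circuit_size_def by (simp add: len_circ)
qed

theorem lemma4p1:
  "\<exists>c::nat. \<forall>m d. m \<ge> 1 \<longrightarrow> d \<ge> 1 \<longrightarrow>
     (\<exists>C :: 'a::field gate list. computes C (Pd m d) \<and> UPT C \<and>
        circuit_size C \<le> c * m^2 * d)"
proof (intro exI[of _ 10] allI impI)
  fix m d :: nat assume m: "m \<ge> 1" and d: "d \<ge> 1"
  show "\<exists>C :: 'a::field gate list. computes C (Pd m d) \<and> UPT C \<and> circuit_size C \<le> 10 * m^2 * d"
  proof (intro exI[of _ "circ m d"] conjI)
    show "computes (circ m d :: 'a gate list) (Pd m d)"
      unfolding computes_def using wf_circ[OF m, where d=d and 'a='a] output_circ[OF m, where d=d and 'a='a] by simp
    show "UPT (circ m d :: 'a gate list)" by (rule upt_circ[OF m])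
    have mm: "1 \<le> m*m" using m by simp
    have "m \<le> m*m" using m by simp
    have "m*m*1 \<le> m*m*d" using d by (rule mult_le_mono2)
    then have b: "m*m \<le> m*m*d" by simp
    have a1: "m \<le> m*m*d" using b \<open>m \<le> m*m\<close> by linarith
    have a2: "1 \<le> m*m*d" using b mm by linarith
    have a3: "d*m \<le> m*m*d" using \<open>m \<le> m*m\<close> by (simp add: mult.commute)
    have "circuit_size (circ m d :: 'a gate list) = m + d*(m*m) + d*m + 1 + 4*(m*m*d) + m"
      by (simp add: size_circ algebra_simps)
    also have "\<dots> \<le> 10 * (m*m*d)"
    proof -
      have a4: "d*(m*m) = m*m*d" by (simp add: mult.commute)
      show ?thesis using a1 a2 a3 a4 by linarith
    qed
    also have "\<dots> = 10 * m^2 * d" by (simp add: power2_eq_square)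
    finally show "circuit_size (circ m d :: 'a gate list) \<le> 10 * m^2 * d" .
  qed
qed

end
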